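(* Let $\vec k=(k_1,\dots,k_\ell)$ be a vector of positive integers and let $F$ be a tableau filled bijectively with the labels $1,2,\dots,|\vec k|+\ell$, with $\ell$ top-justified columns, the $i$-th column containing $k_i+1$ entries, such that the entries of the first row increase from left to right and each column increases from top to bottom. Then $F=\eta_*(\pi)$ for some $\pi\in\mathcal{D}_{\vec k}$ if and only if for every pair of entries $a,d$ with $d$ immediately below $a$ in $F$ and $a<d-1$, the set of labels $\{a+1,a+2,\dots,d-1\}$ is a union of entire columns of $F$.
   Context: $|\vec k|=k_1+\cdots+k_\ell$, $N=|\vec k|+\ell$. A $\vec k$-Dyck path is a word $\pi=\pi_1\cdots\pi_N$ containing the letters $S^{k_1},\dots,S^{k_\ell}$ exactly once each and in this order, together with $|\vec k|$ letters $W$, such that all starting ranks are nonnegative, where $r_1=0$, $r_{i+1}=r_i+k_j$ if $\pi_i=S^{k_j}$ and $r_{i+1}=r_i-1$ if $\pi_i=W$. $\mathcal D_{\vec k}$ is the set of such paths. Filling algorithm $\eta_*$: in a tableau of $\ell$ top-justified columns, column $i$ having $k_i+1$ cells, place $1$ at the top of column 1; for $i=2,\dots,N$, call an entry active if it is currently the bottom entry of a column $i'$ not yet containing $k_{i'}+1$ entries; if $\pi_i=W$ place $i$ immediately below the largest active entry, otherwise place $i$ at the top of the first empty column. The resulting tableau is $\eta_*(\pi)$. *)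

theory Defs
  imports Main
begin

text \<open>Letters of a k-Dyck path: W, or S j standing for the letter S^{k_(j+1)}
  (columns / letters are indexed from 0).\<close>
datatype letter = W | S nat

fun rank_step :: "nat list \<Rightarrow> letter \<Rightarrow> int" where
  "rank_step k W = -1"
| "rank_step k (S j) = int (k ! j)"

definition dyck_paths :: "nat list \<Rightarrow> letter list set" where
  "dyck_paths k = {\<pi>.
      filter (\<lambda>x. x \<noteq> W) \<pi> = map S [0..<length k]
    \<and> length (filter (\<lambda>x. x = W) \<pi>) = sum_list k
    \<and> (\<forall>i < length \<pi>. 0 \<le> sum_list (map (rank_step k) (take i \<pi>)))}"

text \<open>Tableaux are lists of columns (each column a list of entries, top to bottom).
  Active columns: nonempty and not yet full.\<close>
definition active_cols :: "nat list \<Rightarrow> nat list list \<Rightarrow> nat set" where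
  "active_cols k T = {c. c < length T \<and> T ! c \<noteq> [] \<and> length (T ! c) < k ! c + 1}"

fun fill_step :: "nat list \<Rightarrow> nat \<Rightarrow> letter \<Rightarrow> nat list list \<Rightarrow> nat list list" where
  "fill_step k i W T =
     (let A = active_cols k T in
      if A = {} then T
      else let c = (LEAST c. c \<in> A \<and> (\<forall>c'\<in>A. last (T ! c') \<le> last (T ! c)))
           in T[c := T ! c @ [i]])"
| "fill_step k i (S j) T =
     (if \<exists>c < length T. T ! c = [] then
        (let c = (LEAST c. c < length T \<and> T ! c = []) in T[c := [i]])
      else T)"

text \<open>The filling map eta_*: place 1 at the top of column 1, then process
  letters 2..N.\<close>
definition eta :: "nat list \<Rightarrow> letter list \<Rightarrow> nat list list" where
  "eta k \<pi> = fold (\<lambda>(i, x) T. fill_step k i x T)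
                   (zip [2..<length \<pi> + 1] (drop 1 \<pi>))
                   ((replicate (length k) [])[0 := [1]])"

end

theory Submission
  imports Defs
begin


definition R :: "nat \<Rightarrow> nat list list \<Rightarrow> nat list list" where
  "R m T = map (filter (\<lambda>x. x \<le> m)) T"

lemma sorted_filter_less_take:
  fixes xs :: "nat list"
  assumes "sorted_wrt (<) xs" "r < length xs"
  shows "filter (\<lambda>x. x < xs ! r) xs = take r xs"
  using assms
proof (induction xs arbitrary: r)
  case Nil then show ?case by simp
next
  case (Cons y ys)
  show ?case
  proof (cases r)
    case 0
    then show ?thesis using Cons.prems by (auto simp: filter_empty_conv)
  next
    case (Suc r')
    have "y < ys ! r'" using Cons.prems Suc by auto
    then show ?thesis using Cons Suc by auto
  qed
qed

lemma sorted_filter_le_take: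
  fixes xs :: "nat list"
  assumes "sorted_wrt (<) xs" "r < length xs"
  shows "filter (\<lambda>x. x \<le> xs ! r) xs = take (Suc r) xs"
  using assms
proof (induction xs arbitrary: r)
  case Nil then show ?case by simp
next
  case (Cons y ys)
  show ?case
  proof (cases r)
    case 0
    then show ?thesis using Cons.prems by (auto simp: filter_empty_conv)
  next
    case (Suc r')
    have "y < ys ! r'" using Cons.prems Suc by auto
    then show ?thesis using Cons Suc by (auto intro: less_imp_le)
  qed
qed

lemma sorted_nth_le:
  fixes xs :: "nat list"
  assumes "sorted_wrt (<) xs" "i \<le> j" "j < length xs"
  shows "xs ! i \<le> xs ! j"
  using assms sorted_wrt_nth_less[of "(<)" xs i j] by (cases "i = j") auto

lemma sorted_le_last:
  fixes xs :: "nat list"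
  assumes "sorted_wrt (<) xs" "b \<in> set xs"
  shows "b \<le> last xs"
proof -
  obtain i where i: "i < length xs" "xs ! i = b" using assms(2) by (auto simp: in_set_conv_nth)
  have "xs ! i \<le> xs ! (length xs - 1)" using sorted_nth_le[OF assms(1)] i by auto
  moreover have "xs \<noteq> []" using i(1) by auto
  ultimately show ?thesis using i by (simp add: last_conv_nth)
qed

lemma sorted_between:
  fixes xs :: "nat list"
  assumes "sorted_wrt (<) xs" "Suc r < length xs" "xs ! r < b" "b < xs ! Suc r" "b \<in> set xs"
  shows False
proof -
  obtain i where i: "i < length xs" "xs ! i = b" using assms(5) by (auto simp: in_set_conv_nth)
  show False
  proof (cases "i \<le> r")
    case True
    then have "xs ! i \<le> xs ! r" using sorted_nth_le[OF assms(1)] assms(2) by auto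
    then show False using i assms by auto
  next
    case False
    then have "xs ! Suc r \<le> xs ! i" using sorted_nth_le[OF assms(1)] i by auto
    then show False using i assms by auto
  qed
qed

lemma crossing:
  fixes f :: "nat \<Rightarrow> nat"
  shows "i < j \<Longrightarrow> f i < a \<Longrightarrow> a < f j \<Longrightarrow> (\<forall>t. i \<le> t \<and> t \<le> j \<longrightarrow> f t \<noteq> a)
    \<Longrightarrow> \<exists>s. i \<le> s \<and> s < j \<and> f s < a \<and> a < f (Suc s)"
proof (induction j)
  case 0 then show ?case by simp
next
  case (Suc j)
  show ?case
  proof (cases "f j < a")
    case True then show ?thesis using Suc.prems by (intro exI[of _ j]) auto
  next
    case False
    then have "a < f j" using Suc.prems(4) by (metis le_refl less_Suc_eq_le not_less_iff_gr_or_eq less_imp_le Suc.prems(1))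
    moreover have "i < j" using False Suc.prems by (metis less_SucE)
    ultimately obtain s where "i \<le> s \<and> s < j \<and> f s < a \<and> a < f (Suc s)"
      using Suc.IH Suc.prems by auto
    then show ?thesis by (intro exI[of _ s]) auto
  qed
qed

lemma argmax_ex:
  fixes g :: "nat \<Rightarrow> nat"
  assumes "finite A" "A \<noteq> {}"
  shows "\<exists>c. c \<in> A \<and> (\<forall>c'\<in>A. g c' \<le> g c)"
proof -
  have "Max (g ` A) \<in> g ` A" using assms by auto
  then obtain c where "c \<in> A" "g c = Max (g ` A)" by auto
  then show ?thesis using assms by (intro exI[of _ c]) auto
qed

lemma set_concat_update: "set (concat (xs[i := v])) \<subseteq> set (concat xs) \<union> set v"
  using set_update_subset_insert[of xs i v] by auto

lemma eta_take1: "eta k (take 1 \<pi>) = (replicate (length k) [])[0 := [1]]"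
  by (simp add: eta_def)

lemma eta_step:
  assumes "1 \<le> m" "m < length \<pi>"
  shows "eta k (take (Suc m) \<pi>) = fill_step k (Suc m) (\<pi> ! m) (eta k (take m \<pi>))"
proof -
  have l1: "length (take (Suc m) \<pi>) = Suc m" "length (take m \<pi>) = m" using assms by auto
  have u: "[2..<length (take (Suc m) \<pi>) + 1] = [2..<length (take m \<pi>) + 1] @ [Suc m]"
    unfolding l1 using assms by simp
  have d: "drop 1 (take (Suc m) \<pi>) = drop 1 (take m \<pi>) @ [\<pi> ! m]"
    using assms by (simp add: take_Suc_conv_app_nth)
  have l2: "length [2..<length (take m \<pi>) + 1] = m - 1" unfolding l1 length_upt by arith
  have l3: "length (drop 1 (take m \<pi>)) = m - 1" unfolding length_drop l1 ..
  have l: "length [2..<length (take m \<pi>) + 1] = length (drop 1 (take m \<pi>))"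
    unfolding l2 l3 ..
  show ?thesis unfolding eta_def u d zip_append[OF l] by simp
qed

lemma fill_step_length: "length (fill_step k i x T) = length T"
  by (cases x) (auto simp: Let_def)

lemma R_id: "\<forall>x\<in>set (concat T). x \<le> m \<Longrightarrow> R m T = T"
  unfolding R_def by (rule map_idI) auto

lemma fill_step_R:
  assumes "\<forall>x\<in>set (concat T). x \<le> m"
  shows "R m (fill_step k (Suc m) x T) = T
     \<and> (\<forall>y\<in>set (concat (fill_step k (Suc m) x T)). y \<le> Suc m)"
proof -
  have RT: "R m T = T" using R_id[OF assms] .
  have upd: "R m (T[c := T ! c @ [Suc m]]) = T" for c
  proof (cases "c < length T")
    case True
    then have "\<forall>x\<in>set (T ! c). x \<le> m" using assms by (auto simp: set_concat)
    then have "filter (\<lambda>x. x \<le> m) (T ! c @ [Suc m]) = T ! c" by auto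
    then show ?thesis using RT unfolding R_def map_update by simp
  qed (simp add: list_update_beyond RT)
  have upd2: "R m (T[c := [Suc m]]) = T" if "T ! c = []" for c
    using RT that unfolding R_def map_update by (metis filter.simps list_update_id Suc_n_not_le_n)
  have b1: "\<forall>y\<in>set (concat (T[c := v])). y \<le> Suc m" if "\<forall>y\<in>set v. y \<le> Suc m" for c v
    using set_concat_update[of T c v] that assms by (meson Un_iff empty_iff empty_set le_SucI set_ConsD subsetD)
  have bT': "\<forall>y\<in>set (concat T). y \<le> Suc m" using assms le_SucI by blast
  have b2: "\<forall>y\<in>set (concat (T[c := T ! c @ [Suc m]])). y \<le> Suc m" for c
  proof (cases "c < length T")
    case True
    then have "\<forall>x\<in>set (T ! c). x \<le> m" using assms by (auto simp: set_concat)
    then have "\<forall>y\<in>set (T ! c @ [Suc m]). y \<le> Suc m" by auto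
    then show ?thesis using b1 by blast
  next
    case False then show ?thesis using bT' by (simp add: list_update_beyond)
  qed
  have bT: "\<forall>y\<in>set (concat T). y \<le> Suc m" using assms le_SucI by blast
  show ?thesis
  proof (cases x)
    case W
    show ?thesis
      using upd b2 bT RT
      by (auto simp: W Let_def)
  next
    case (S j)
    show ?thesis
    proof (cases "\<exists>c < length T. T ! c = []")
      case True
      let ?c = "LEAST c. c < length T \<and> T ! c = []"
      have "T ! ?c = []" using LeastI_ex[OF True] by simp
      then show ?thesis using True upd2 b1[of "[Suc m]"] by (simp add: S)
    next
      case False
      have "fill_step k (Suc m) x T = T" unfolding S fill_step.simps if_not_P[OF False] ..
      then show ?thesis using RT bT by simp
    qed
  qed
qed



lemma eta_take1_bound: "\<forall>x\<in>set (concat (eta k (take 1 \<pi>))). x \<le> 1"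
proof -
  have "set (concat ((replicate (length k) [])[0 := [1::nat]])) \<subseteq> {1}"
    using set_concat_update[of "replicate (length k) []" 0 "[1::nat]"] by auto
  then show ?thesis unfolding eta_take1 by auto
qed

lemma eta_bound:
  "1 \<le> m \<Longrightarrow> m \<le> length \<pi> \<Longrightarrow> \<forall>x\<in>set (concat (eta k (take m \<pi>))). x \<le> m"
proof (induction m)
  case 0 then show ?case by simp
next
  case (Suc m)
  show ?case
  proof (cases "m = 0")
    case True
    then show ?thesis using eta_take1_bound by simp
  next
    case False
    have m1: "1 \<le> m" "m < length \<pi>" using False Suc.prems by auto
    have IH: "\<forall>x\<in>set (concat (eta k (take m \<pi>))). x \<le> m" using Suc.IH m1 by simp
    have e: "eta k (take (Suc m) \<pi>) = fill_step k (Suc m) (\<pi> ! m) (eta k (take m \<pi>))"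
      using eta_step[OF m1] .
    show ?thesis unfolding e using fill_step_R[OF IH] by simp
  qed
qed

lemma filter_filter_le: "(m::nat) \<le> m' \<Longrightarrow> filter (\<lambda>x. x \<le> m) (filter (\<lambda>x. x \<le> m') xs) = filter (\<lambda>x. x \<le> m) xs"
  by (induction xs) auto

lemma R_R: "m \<le> m' \<Longrightarrow> R m (R m' T) = R m T"
  unfolding R_def map_map o_def by (simp only: filter_filter_le)

lemma eta_restrict:
  "1 \<le> m \<Longrightarrow> m \<le> m' \<Longrightarrow> m' \<le> length \<pi> \<Longrightarrow> R m (eta k (take m' \<pi>)) = eta k (take m \<pi>)"
proof (induction m')
  case 0 then show ?case by simp
next
  case (Suc m')
  show ?case
  proof (cases "m = Suc m'")
    case True
    then show ?thesis using R_id[OF eta_bound[of "Suc m'" \<pi> k]] Suc.prems by simp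
  next
    case False
    have m1: "1 \<le> m'" "m' < length \<pi>" "m \<le> m'" using False Suc.prems by auto
    have IH: "R m (eta k (take m' \<pi>)) = eta k (take m \<pi>)" using Suc.IH m1 Suc.prems by simp
    have B: "\<forall>x\<in>set (concat (eta k (take m' \<pi>))). x \<le> m'" using eta_bound[of m' \<pi> k] m1 by simp
    have e: "eta k (take (Suc m') \<pi>) = fill_step k (Suc m') (\<pi> ! m') (eta k (take m' \<pi>))"
      using eta_step[OF m1(1,2)] .
    have "R m' (eta k (take (Suc m') \<pi>)) = eta k (take m' \<pi>)"
      unfolding e using fill_step_R[OF B] by simp
    then have "R m (R m' (eta k (take (Suc m') \<pi>))) = eta k (take m \<pi>)" using IH by simp
    then show ?thesis using R_R[OF m1(3)] by simp
  qed
qed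



locale tab =
  fixes k :: "nat list" and F :: "nat list list"
  assumes kpos: "\<forall>x \<in> set k. 0 < x"
    and len: "length F = length k"
    and collen: "\<forall>i < length k. length (F ! i) = k ! i + 1"
    and dist: "distinct (concat F)" and setF: "set (concat F) = {1 .. sum_list k + length k}"
    and row: "\<forall>i j. i < j \<and> j < length k \<longrightarrow> F ! i ! 0 < F ! j ! 0"
    and col: "\<forall>i < length k. sorted_wrt (<) (F ! i)"
begin

lemma colne: "c < length k \<Longrightarrow> F ! c \<noteq> []"
  using collen by (metis add_is_0 length_0_conv one_neq_zero)

lemma disj:
  assumes "c < length k" "c' < length k" "c \<noteq> c'" "x \<in> set (F ! c)" "x \<in> set (F ! c')"
  shows False
proof -
  have d: "distinct (removeAll [] F)"
    and s: "\<forall>ys zs. ys \<in> set F \<and> zs \<in> set F \<and> ys \<noteq> zs \<longrightarrow> set ys \<inter> set zs = {}"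
    using dist unfolding distinct_concat_iff by auto
  have "removeAll [] F = F"
  proof (rule removeAll_id)
    show "[] \<notin> set F" using colne len by (auto simp: in_set_conv_nth)
  qed
  then have "distinct F" using d by simp
  then have "F ! c \<noteq> F ! c'" using assms len by (simp add: nth_eq_iff_index_eq)
  moreover have "F ! c \<in> set F" "F ! c' \<in> set F" using assms len by auto
  ultimately show False using s assms by blast
qed

lemma label_ex:
  assumes "x \<in> {1 .. sum_list k + length k}"
  shows "\<exists>c r. c < length k \<and> r < length (F ! c) \<and> F ! c ! r = x"
proof -
  have "x \<in> set (concat F)" using assms setF by simp
  then obtain ys where "ys \<in> set F" "x \<in> set ys" by auto
  then obtain c where c: "c < length F" "F ! c = ys" by (auto simp: in_set_conv_nth)
  then obtain r where "r < length (F ! c)" "F ! c ! r = x" using \<open>x \<in> set ys\<close> by (auto simp: in_set_conv_nth)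
  then show ?thesis using c len by auto
qed

lemma label_range:
  assumes "c < length k" "x \<in> set (F ! c)"
  shows "1 \<le> x \<and> x \<le> sum_list k + length k"
proof -
  have "x \<in> set (concat F)" using assms len by (auto intro!: bexI[of _ "F ! c"])
  then show ?thesis using setF by auto
qed

lemma uniq:
  assumes "c < length k" "c' < length k" "r < length (F ! c)" "r' < length (F ! c')"
    "F ! c ! r = F ! c' ! r'"
  shows "c = c' \<and> r = r'"
proof -
  have "c = c'" using disj[of c c' "F ! c ! r"] assms by (metis nth_mem)
  moreover have "r = r'"
  proof (rule ccontr)
    assume "r \<noteq> r'"
    then have o: "r < r' \<or> r' < r" by auto
    have s: "sorted_wrt (<) (F ! c)" using col assms by auto
    show False
    proof (cases "r < r'")
      case True
      then have "F ! c ! r < F ! c ! r'" using sorted_wrt_nth_less[OF s True] assms \<open>c = c'\<close> by simp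
      then show False using assms \<open>c = c'\<close> by simp
    next
      case False
      then have "r' < r" using o by simp
      then have "F ! c ! r' < F ! c ! r" using sorted_wrt_nth_less[OF s] assms by blast
      then show False using assms \<open>c = c'\<close> by simp
    qed
  qed
  ultimately show ?thesis by simp
qed

lemma Rnth: "c < length k \<Longrightarrow> R m F ! c = filter (\<lambda>x. x \<le> m) (F ! c)"
  unfolding R_def using len by simp

lemma R_len: "length (R m F) = length k"
  unfolding R_def using len by simp

lemma R_step_at:
  assumes "c < length k" "r < length (F ! c)" "F ! c ! r = Suc m"
  shows "R m F ! c = take r (F ! c) \<and> R (Suc m) F = (R m F)[c := take (Suc r) (F ! c)]"
proof
  have s: "sorted_wrt (<) (F ! c)" using col assms by auto
  have "filter (\<lambda>x. x \<le> m) (F ! c) = filter (\<lambda>x. x < F ! c ! r) (F ! c)"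
    using assms by (intro filter_cong) auto
  then show A: "R m F ! c = take r (F ! c)"
    using Rnth[OF assms(1)] sorted_filter_less_take[OF s assms(2)] by simp
  show "R (Suc m) F = (R m F)[c := take (Suc r) (F ! c)]"
  proof (rule nth_equalityI)
    show "length (R (Suc m) F) = length ((R m F)[c := take (Suc r) (F ! c)])" by (simp add: R_len)
    fix i assume "i < length (R (Suc m) F)"
    then have i: "i < length k" by (simp add: R_len)
    show "R (Suc m) F ! i = (R m F)[c := take (Suc r) (F ! c)] ! i"
    proof (cases "i = c")
      case True
      have "filter (\<lambda>x. x \<le> Suc m) (F ! c) = take (Suc r) (F ! c)"
        using sorted_filter_le_take[OF s assms(2)] assms(3) by simp
      then show ?thesis using True i Rnth R_len by simp
    next
      case False
      have "Suc m \<notin> set (F ! i)" using disj[of c i "Suc m"] assms False i by (metis nth_mem)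
      then have "filter (\<lambda>x. x \<le> Suc m) (F ! i) = filter (\<lambda>x. x \<le> m) (F ! i)"
        by (intro filter_cong) (auto simp: le_Suc_eq)
      then show ?thesis using False i Rnth R_len by simp
    qed
  qed
qed

lemma R_step:
  assumes "m < sum_list k + length k"
  shows "\<exists>c r. c < length k \<and> r < length (F ! c) \<and> F ! c ! r = Suc m \<and>
     R m F ! c = take r (F ! c) \<and> R (Suc m) F = (R m F)[c := take (Suc r) (F ! c)]"
proof -
  obtain c r where "c < length k" "r < length (F ! c)" "F ! c ! r = Suc m"
    using label_ex[of "Suc m"] assms by auto
  then show ?thesis using R_step_at by blast
qed

lemma R_all: "R (sum_list k + length k) F = F"
proof (rule R_id, rule ballI)
  fix x assume "x \<in> set (concat F)"
  then show "x \<le> sum_list k + length k" using setF by auto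
qed

lemma R0: assumes "c < length k" shows "R 0 F ! c = []"
proof -
  have "\<forall>x\<in>set (F ! c). \<not> x \<le> 0" using label_range[OF assms] by force
  then show ?thesis using Rnth[OF assms] by (simp add: filter_empty_conv)
qed

end


context tab begin

definition RHS where
  "RHS \<longleftrightarrow> (\<forall>i < length k. \<forall>r. r + 1 < length (F ! i) \<longrightarrow>
            F ! i ! r < F ! i ! (r + 1) - 1 \<longrightarrow>
            (\<exists>C \<subseteq> {..<length k}.
               {F ! i ! r + 1 .. F ! i ! (r + 1) - 1} = (\<Union>c\<in>C. set (F ! c))))"

definition Star where
  "Star \<longleftrightarrow> (\<forall>c<length k. \<forall>r. Suc r < length (F ! c) \<longrightarrow>
     (\<forall>c'<length k. \<forall>b\<in>set (F ! c'). \<forall>e\<in>set (F ! c').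
        F ! c ! r < b \<longrightarrow> b < F ! c ! Suc r \<longrightarrow> F ! c ! Suc r \<le> e \<longrightarrow> False))"

lemma StarD:
  assumes "Star" "c < length k" "Suc r < length (F ! c)" "c' < length k" "b \<in> set (F ! c')"
    "e \<in> set (F ! c')" "F ! c ! r < b" "b < F ! c ! Suc r" "F ! c ! Suc r \<le> e"
  shows False
proof -
  have "\<forall>c'<length k. \<forall>b\<in>set (F ! c'). \<forall>e\<in>set (F ! c').
        F ! c ! r < b \<longrightarrow> b < F ! c ! Suc r \<longrightarrow> F ! c ! Suc r \<le> e \<longrightarrow> False"
    using assms(1,2,3) unfolding Star_def by simp
  then show False using assms(4-) by simp
qed

lemma RHSD:
  assumes "RHS" "c < length k" "r + 1 < length (F ! c)" "F ! c ! r < F ! c ! (r + 1) - 1"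
  shows "\<exists>C \<subseteq> {..<length k}. {F ! c ! r + 1 .. F ! c ! (r + 1) - 1} = (\<Union>c\<in>C. set (F ! c))"
  using assms unfolding RHS_def by simp

lemma RHS_Star: assumes "RHS" shows "Star"
  unfolding Star_def
proof (intro allI impI ballI)
  fix c r c' b e
  assume c: "c < length k" and r: "Suc r < length (F ! c)" and c': "c' < length k"
    and b: "b \<in> set (F ! c')" and e: "e \<in> set (F ! c')"
    and ab: "F ! c ! r < b" and bd: "b < F ! c ! Suc r" and de: "F ! c ! Suc r \<le> e"
  have "F ! c ! r < F ! c ! (r + 1) - 1" using ab bd by simp
  moreover have "r + 1 < length (F ! c)" using r by simp
  ultimately have "\<exists>C \<subseteq> {..<length k}. {F ! c ! r + 1 .. F ! c ! (r + 1) - 1} = (\<Union>c\<in>C. set (F ! c))"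
    using RHSD[OF assms c] by blast
  then obtain C where C: "C \<subseteq> {..<length k}"
    "{F ! c ! r + 1 .. F ! c ! (r + 1) - 1} = (\<Union>c\<in>C. set (F ! c))"
    by blast
  have hb: "b \<in> {F ! c ! r + 1 .. F ! c ! (r + 1) - 1}" using ab bd by auto
  have "b \<in> (\<Union>c\<in>C. set (F ! c))" unfolding C(2)[symmetric] using hb .
  then obtain c'' where c'': "c'' \<in> C" "b \<in> set (F ! c'')" by blast
  have "c'' = c'" using disj[of c'' c' b] c'' C c' b by auto
  then have "e \<in> {F ! c ! r + 1 .. F ! c ! (r + 1) - 1}" using C c'' e by auto
  then show False using de by auto
qed

lemma Star_RHS: assumes "Star" shows "RHS"
  unfolding RHS_def
proof (intro allI impI)
  fix c r
  assume c: "c < length k" and r: "r + 1 < length (F ! c)" and ad: "F ! c ! r < F ! c ! (r + 1) - 1"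
  define a where "a = F ! c ! r"
  define d where "d = F ! c ! Suc r"
  have sc: "sorted_wrt (<) (F ! c)" using col c by auto
  have aF: "a \<in> set (F ! c)" "d \<in> set (F ! c)" using r by (auto simp: a_def d_def)
  have dN: "d \<le> sum_list k + length k" using label_range[OF c aF(2)] by simp
  define C where "C = {c' \<in> {..<length k}. set (F ! c') \<inter> {a+1 .. d-1} \<noteq> {}}"
  have "{a + 1 .. d - 1} = (\<Union>c\<in>C. set (F ! c))"
  proof
    show "{a + 1 .. d - 1} \<subseteq> (\<Union>c\<in>C. set (F ! c))"
    proof
      fix x assume x: "x \<in> {a + 1 .. d - 1}"
      then have "x \<in> {1 .. sum_list k + length k}" using dN by auto
      then obtain c' r' where "c' < length k" "r' < length (F ! c')" "F ! c' ! r' = x"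
        using label_ex by blast
      then have xin: "x \<in> set (F ! c')" using nth_mem by blast
      then have "c' \<in> C" using x \<open>c' < length k\<close> unfolding C_def by auto
      note xin this
      then show "x \<in> (\<Union>c\<in>C. set (F ! c))" by blast
    qed
  next
    show "(\<Union>c\<in>C. set (F ! c)) \<subseteq> {a + 1 .. d - 1}"
    proof
      fix y assume "y \<in> (\<Union>c\<in>C. set (F ! c))"
      then obtain c' where c': "c' < length k" "y \<in> set (F ! c')"
        and "set (F ! c') \<inter> {a+1 .. d-1} \<noteq> {}" unfolding C_def by auto
      then obtain b where b0: "b \<in> set (F ! c')" "b \<in> {a+1 .. d-1}" by blast
      then have "a < b" "b < d" by auto
      note b = b0(1) this
      have yd: "y < d"
      proof (rule ccontr)
        assume "\<not> y < d"
        then have le: "F ! c ! Suc r \<le> y" unfolding d_def by simp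
        have Sr: "Suc r < length (F ! c)" using r by simp
        show False using StarD[OF assms c Sr c'(1) b(1) c'(2) b(2)[unfolded a_def] b(3)[unfolded d_def] le] .
      qed
      have cc: "c' \<noteq> c"
      proof
        assume "c' = c"
        then have bc: "b \<in> set (F ! c)" using b(1) by simp
        have Sr: "Suc r < length (F ! c)" using r by simp
        show False using sorted_between[OF sc Sr b(2)[unfolded a_def] b(3)[unfolded d_def] bc] .
      qed
      have ay: "a < y"
      proof (rule ccontr)
        assume "\<not> a < y"
        moreover have "y \<noteq> a" using disj[of c c' a] c c' aF cc by auto
        ultimately have ya: "y < a" by simp
        have sc': "sorted_wrt (<) (F ! c')" using col c' by auto
        obtain iy where iy: "iy < length (F ! c')" "F ! c' ! iy = y" using c'(2) by (auto simp: in_set_conv_nth)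
        obtain ib where ib: "ib < length (F ! c')" "F ! c' ! ib = b" using b(1) by (auto simp: in_set_conv_nth)
        have "iy < ib"
        proof (rule ccontr)
          assume "\<not> iy < ib"
          then have "ib \<le> iy" by simp
          then have "F ! c' ! ib \<le> F ! c' ! iy" using sorted_nth_le[OF sc' _ iy(1)] by blast
          then show False using iy ib ya b by simp
        qed
        moreover have "\<forall>t. iy \<le> t \<and> t \<le> ib \<longrightarrow> F ! c' ! t \<noteq> a"
        proof (intro allI impI)
          fix t assume "iy \<le> t \<and> t \<le> ib"
          then have "t < length (F ! c')" using ib by simp
          then have "F ! c' ! t \<in> set (F ! c')" by simp
          then show "F ! c' ! t \<noteq> a" using disj[of c c' a] c c' aF cc by auto
        qed
        ultimately obtain s where s: "iy \<le> s" "s < ib" "F ! c' ! s < a" "a < F ! c' ! Suc s"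
          using crossing[of iy ib "\<lambda>t. F ! c' ! t" a] iy ib ya b by auto
        have "F ! c' ! Suc s \<le> b" using sorted_nth_le[OF sc', of "Suc s" ib] s ib by simp
        then have le: "F ! c' ! Suc s \<le> d" using b by simp
        have Ss: "Suc s < length (F ! c')" using s ib by simp
        show False using StarD[OF assms c'(1) Ss c aF(1) aF(2) s(3) s(4) le] .
      qed
      show "y \<in> {a + 1 .. d - 1}" using ay yd by auto
    qed
  qed
  moreover have "C \<subseteq> {..<length k}" unfolding C_def by auto
  ultimately show "\<exists>C\<subseteq>{..<length k}. {F ! c ! r + 1..F ! c ! (r + 1) - 1} = (\<Union>c\<in>C. set (F ! c))"
    unfolding a_def d_def by auto
qed

end


lemma dyck_len:
  assumes "\<pi> \<in> dyck_paths k"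
  shows "length \<pi> = sum_list k + length k"
proof -
  have a: "filter (\<lambda>x. x \<noteq> W) \<pi> = map S [0..<length k]"
    and b: "length (filter (\<lambda>x. x = W) \<pi>) = sum_list k"
    using assms unfolding dyck_paths_def by auto
  have "length (filter (\<lambda>x. x = W) \<pi>) + length (filter (\<lambda>x. \<not> x = W) \<pi>) = length \<pi>"
    by (rule sum_length_filter_compl)
  moreover have "length (filter (\<lambda>x. x \<noteq> W) \<pi>) = length k" using a by simp
  ultimately show ?thesis using b by simp
qed

lemma last_take_Suc: "r < length xs \<Longrightarrow> last (take (Suc r) xs) = xs ! r"
  by (simp add: take_Suc_conv_app_nth)

context tab begin

lemma fwd:
  assumes pd: "\<pi> \<in> dyck_paths k" and et: "eta k \<pi> = F"
  shows "Star"
  unfolding Star_def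
proof (intro allI impI ballI)
  fix c r c' b e
  assume c: "c < length k" and r: "Suc r < length (F ! c)" and c': "c' < length k"
    and b: "b \<in> set (F ! c')" and e: "e \<in> set (F ! c')"
    and ab: "F ! c ! r < b" and bd: "b < F ! c ! Suc r" and de: "F ! c ! Suc r \<le> e"
  define m where "m = F ! c ! Suc r - 1"
  have dF: "F ! c ! Suc r \<in> set (F ! c)" using r by simp
  have dN: "F ! c ! Suc r \<le> sum_list k + length k" using label_range[OF c dF] by simp
  have dm: "F ! c ! Suc r = Suc m" using ab bd unfolding m_def by simp
  have m1: "1 \<le> m" using ab bd unfolding m_def by simp
  have lp: "length \<pi> = sum_list k + length k" using dyck_len[OF pd] .
  have mN: "m < length \<pi>" using dN dm lp by simp
  have Tm: "eta k (take m \<pi>) = R m F"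
    using eta_restrict[of m "length \<pi>" \<pi> k] m1 mN et by simp
  have TSm: "eta k (take (Suc m) \<pi>) = R (Suc m) F"
    using eta_restrict[of "Suc m" "length \<pi>" \<pi> k] m1 mN et by simp
  have st: "R (Suc m) F = fill_step k (Suc m) (\<pi> ! m) (R m F)"
    using eta_step[OF m1 mN, of k] Tm TSm by simp
  define T where "T = R m F"
  have Tc: "T ! c = take (Suc r) (F ! c)" and RS: "R (Suc m) F = T[c := take (Suc (Suc r)) (F ! c)]"
    using R_step_at[OF c r dm] unfolding T_def by auto
  have lT: "length T = length k" unfolding T_def by (simp add: R_len)
  have fe: "fill_step k (Suc m) (\<pi> ! m) T = T[c := take (Suc (Suc r)) (F ! c)]"
    unfolding T_def using trans[OF st[symmetric] RS[unfolded T_def]] .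
  have fs: "fill_step k (Suc m) (\<pi> ! m) T ! c = take (Suc (Suc r)) (F ! c)"
    unfolding fe using c lT by simp
  have lTc: "length (T ! c) = Suc r" using Tc r by simp
  have lfc: "length (take (Suc (Suc r)) (F ! c)) = Suc (Suc r)" using r by simp
  have cA: "c \<in> active_cols k T \<and> (\<forall>c'\<in>active_cols k T. last (T ! c') \<le> last (T ! c))"
  proof (cases "\<pi> ! m")
    case (S j)
    show ?thesis
    proof (cases "\<exists>c < length T. T ! c = []")
      case True
      define c1 where "c1 = (LEAST c. c < length T \<and> T ! c = [])"
      have "fill_step k (Suc m) (\<pi> ! m) T = T[c1 := [Suc m]]"
        unfolding S fill_step.simps if_P[OF True] Let_def c1_def ..
      then have "fill_step k (Suc m) (\<pi> ! m) T ! c = (if c1 = c then [Suc m] else T ! c)"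
        using c lT by simp
      then have "length (fill_step k (Suc m) (\<pi> ! m) T ! c) \<le> Suc r" using lTc by simp
      moreover have "length (fill_step k (Suc m) (\<pi> ! m) T ! c) = Suc (Suc r)" using fs lfc by simp
      ultimately show ?thesis by simp
    next
      case False
      have "fill_step k (Suc m) (\<pi> ! m) T = T"
        unfolding S fill_step.simps if_not_P[OF False] ..
      then show ?thesis using fs lTc lfc by simp
    qed
  next
    case W
    define A where "A = active_cols k T"
    show ?thesis
    proof (cases "A = {}")
      case True
      have "fill_step k (Suc m) (\<pi> ! m) T = T"
        unfolding W fill_step.simps Let_def A_def[symmetric] using True by simp
      then show ?thesis using fs lTc lfc by simp
    next
      case False
      define c1 where "c1 = (LEAST c. c \<in> A \<and> (\<forall>c'\<in>A. last (T ! c') \<le> last (T ! c)))"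
      have "fill_step k (Suc m) (\<pi> ! m) T = T[c1 := T ! c1 @ [Suc m]]"
        unfolding W fill_step.simps Let_def A_def[symmetric] c1_def using False by simp
      then have f1: "fill_step k (Suc m) (\<pi> ! m) T ! c = (if c1 = c then T ! c @ [Suc m] else T ! c)"
        using c lT by simp
      have "c1 = c"
      proof (rule ccontr)
        assume "c1 \<noteq> c"
        then show False using f1 fs lTc lfc by simp
      qed
      have fin: "finite A" unfolding A_def active_cols_def by simp
      have "\<exists>c. c \<in> A \<and> (\<forall>c'\<in>A. last (T ! c') \<le> last (T ! c))"
        using argmax_ex[OF fin False] .
      then have "c1 \<in> A \<and> (\<forall>c'\<in>A. last (T ! c') \<le> last (T ! c1))"
        unfolding c1_def by (rule LeastI_ex)
      then show ?thesis using \<open>c1 = c\<close> unfolding A_def by simp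
    qed
  qed
  have sc': "sorted_wrt (<) (F ! c')" using col c' by auto
  have Tc': "T ! c' = filter (\<lambda>x. x \<le> m) (F ! c')" unfolding T_def using Rnth[OF c'] .
  have bT: "b \<in> set (T ! c')" using Tc' b bd dm by simp
  have "length (T ! c') < length (F ! c')"
    unfolding Tc' using length_filter_less[OF e] de dm by simp
  then have "c' \<in> active_cols k T" using bT c' lT collen unfolding active_cols_def by auto
  then have "last (T ! c') \<le> last (T ! c)" using cA by blast
  moreover have "last (T ! c) = F ! c ! r" unfolding Tc using r by (intro last_take_Suc) simp
  moreover have "b \<le> last (T ! c')"
    using sorted_le_last[OF sorted_wrt_filter[OF sc'] ] bT unfolding Tc' by simp
  ultimately show False using ab by simp
qed

end


context tab begin

definition istop where "istop x \<longleftrightarrow> (\<exists>j<length k. F ! j ! 0 = x)"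
definition lt where "lt x = (if istop x then S (THE j. j < length k \<and> F ! j ! 0 = x) else W)"
definition pF where "pF = map lt [1..<sum_list k + length k + 1]"

lemma lt_val:
  assumes c: "c < length k" and r: "r < length (F ! c)"
  shows "lt (F ! c ! r) = (if r = 0 then S c else W)"
proof (cases "r = 0")
  case True
  have "istop (F ! c ! r)" unfolding istop_def using c True by auto
  moreover have "(THE j. j < length k \<and> F ! j ! 0 = F ! c ! r) = c"
  proof (rule the_equality)
    show "c < length k \<and> F ! c ! 0 = F ! c ! r" using c True by simp
    fix j assume j: "j < length k \<and> F ! j ! 0 = F ! c ! r"
    have "0 < length (F ! j)" using colne j by simp
    then show "j = c" using uniq[of j c 0 r] j c r by simp
  qed
  ultimately show ?thesis unfolding lt_def using True by simp
next
  case False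
  have "\<not> istop (F ! c ! r)"
  proof
    assume "istop (F ! c ! r)"
    then obtain j where j: "j < length k" "F ! j ! 0 = F ! c ! r" unfolding istop_def by auto
    have "0 < length (F ! j)" using colne j by simp
    then show False using uniq[of j c 0 r] j c r False by simp
  qed
  then show ?thesis unfolding lt_def using False by simp
qed

lemma pF_len: "length pF = sum_list k + length k"
  unfolding pF_def by (simp del: upt_Suc)

lemma pF_nth: "m < sum_list k + length k \<Longrightarrow> pF ! m = lt (Suc m)"
  unfolding pF_def by (simp del: upt_Suc)

lemma R1:
  assumes "0 < length k"
  shows "R 1 F = (replicate (length k) [])[0 := [1]]"
proof -
  have N: "0 < sum_list k + length k" using assms by simp
  obtain c r where c: "c < length k" and r: "r < length (F ! c)" and v: "F ! c ! r = Suc 0"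
    and RS: "R (Suc 0) F = (R 0 F)[c := take (Suc r) (F ! c)]"
    using R_step[OF N] by auto
  have ge1: "\<And>c' r'. c' < length k \<Longrightarrow> r' < length (F ! c') \<Longrightarrow> 1 \<le> F ! c' ! r'"
    using label_range by (meson nth_mem)
  have r0: "r = 0"
  proof (rule ccontr)
    assume "r \<noteq> 0"
    then have "F ! c ! 0 < F ! c ! r" using sorted_wrt_nth_less[of "(<)" "F ! c" 0 r] col c r by simp
    moreover have "0 < length (F ! c)" using r by linarith
    ultimately show False using v ge1[OF c, of 0] by simp
  qed
  have c0: "c = 0"
  proof (rule ccontr)
    assume "c \<noteq> 0"
    then have "F ! 0 ! 0 < F ! c ! 0" using row c by simp
    moreover have "0 < length (F ! 0)" using colne assms by simp
    ultimately show False using v r0 ge1[OF assms, of 0] by simp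
  qed
  have R0F: "R 0 F = replicate (length k) []"
    by (rule nth_equalityI) (simp_all add: R_len R0)
  have "take (Suc 0) (F ! 0) = [1]" using v r0 c0 r by (simp add: take_Suc_conv_app_nth)
  then show ?thesis using RS R0F c0 r0 by simp
qed

end


context tab begin

lemma sim_step:
  assumes st: "Star" and mN: "m < sum_list k + length k"
  shows "fill_step k (Suc m) (pF ! m) (R m F) = R (Suc m) F"
proof -
  obtain c r where c: "c < length k" and r: "r < length (F ! c)" and v: "F ! c ! r = Suc m"
    and Tc: "R m F ! c = take r (F ! c)" and RS: "R (Suc m) F = (R m F)[c := take (Suc r) (F ! c)]"
    using R_step[OF mN] by blast
  define T where "T = R m F"
  have lT: "length T = length k" unfolding T_def by (simp add: R_len)
  have pm: "pF ! m = (if r = 0 then S c else W)" using pF_nth[OF mN] lt_val[OF c r] v by simp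
  show ?thesis
  proof (cases "r = 0")
    case True
    have Tc0: "T ! c = []" using Tc True unfolding T_def by simp
    have ex: "\<exists>c < length T. T ! c = []" using Tc0 c lT by auto
    have "(LEAST c. c < length T \<and> T ! c = []) = c"
    proof (rule Least_equality)
      show "c < length T \<and> T ! c = []" using Tc0 c lT by simp
      fix y assume y: "y < length T \<and> T ! y = []"
      show "c \<le> y"
      proof (rule ccontr)
        assume "\<not> c \<le> y"
        then have "F ! y ! 0 < F ! c ! 0" using row c by simp
        then have le: "F ! y ! 0 \<le> m" using v True by simp
        have yk: "y < length k" using y lT by simp
        have "F ! y ! 0 \<in> set (F ! y)" using colne[OF yk] by simp
        then have "F ! y ! 0 \<in> set (T ! y)" using le Rnth[OF yk] unfolding T_def by simp
        then show False using y by simp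
      qed
    qed
    then have "fill_step k (Suc m) (pF ! m) T = T[c := [Suc m]]"
      unfolding pm using True ex by (simp add: Let_def)
    moreover have "take (Suc r) (F ! c) = [Suc m]" using True v r by (simp add: take_Suc_conv_app_nth)
    ultimately show ?thesis using RS unfolding T_def by simp
  next
    case False
    then obtain r' where r': "r = Suc r'" by (cases r) auto
    define A where "A = active_cols k T"
    define P where "P = (\<lambda>c. c \<in> A \<and> (\<forall>c'\<in>A. last (T ! c') \<le> last (T ! c)))"
    have lastc: "last (T ! c) = F ! c ! r'" unfolding T_def Tc r' using r r' by (intro last_take_Suc) simp
    have cA: "c \<in> A"
      unfolding A_def active_cols_def T_def using Tc c r False collen R_len colne[OF c] by simp
    have Pc: "P c"
      unfolding P_def
    proof (intro conjI ballI cA)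
      fix c' assume c'A: "c' \<in> A"
      show "last (T ! c') \<le> last (T ! c)"
      proof (cases "c' = c")
        case True then show ?thesis by simp
      next
        case False
        have c': "c' < length k" using c'A lT unfolding A_def active_cols_def by simp
        have Tc': "T ! c' = filter (\<lambda>x. x \<le> m) (F ! c')" unfolding T_def using Rnth[OF c'] .
        have ne: "T ! c' \<noteq> []" and ln: "length (T ! c') < length (F ! c')"
          using c'A collen c' unfolding A_def active_cols_def by auto
        define b where "b = last (T ! c')"
        have bT: "b \<in> set (T ! c')" using ne unfolding b_def by simp
        then have bF: "b \<in> set (F ! c')" and bm: "b \<le> m" unfolding Tc' by auto
        have "\<exists>e\<in>set (F ! c'). \<not> e \<le> m"
        proof (rule ccontr)
          assume "\<not> (\<exists>e\<in>set (F ! c'). \<not> e \<le> m)"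
          then have "filter (\<lambda>x. x \<le> m) (F ! c') = F ! c'" by (simp add: filter_id_conv)
          then show False using ln Tc' by simp
        qed
        then obtain e where e: "e \<in> set (F ! c')" "\<not> e \<le> m" by blast
        show ?thesis
        proof (rule ccontr)
          assume "\<not> last (T ! c') \<le> last (T ! c)"
          then have ab: "F ! c ! r' < b" unfolding b_def lastc by simp
          have Sr: "Suc r' < length (F ! c)" using r r' by simp
          have bd: "b < F ! c ! Suc r'" using bm v r' by simp
          have de: "F ! c ! Suc r' \<le> e" using e v r' by simp
          show False using StarD[OF st c Sr c' bF e(1) ab bd de] .
        qed
      qed
    qed
    have "(LEAST c. P c) = c"
    proof (rule Least_equality)
      show "P c" by (rule Pc)
      fix y assume Py: "P y"
      show "c \<le> y"
      proof (rule ccontr)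
        assume "\<not> c \<le> y"
        then have yc: "y \<noteq> c" by simp
        have yA: "y \<in> A" using Py unfolding P_def by simp
        have "last (T ! c) \<le> last (T ! y)" using Py cA unfolding P_def by blast
        moreover have "last (T ! y) \<le> last (T ! c)" using Pc yA unfolding P_def by blast
        ultimately have eq: "last (T ! y) = F ! c ! r'" using lastc by simp
        have yk: "y < length k" using yA lT unfolding A_def active_cols_def by simp
        have "T ! y \<noteq> []" using yA unfolding A_def active_cols_def by simp
        then have "last (T ! y) \<in> set (T ! y)" by simp
        then have "F ! c ! r' \<in> set (F ! y)" using eq Rnth[OF yk] unfolding T_def by simp
        moreover have "F ! c ! r' \<in> set (F ! c)" using r r' by simp
        ultimately show False using disj[OF c yk yc[symmetric]] by blast
      qed
    qed
    then have "fill_step k (Suc m) (pF ! m) T = T[c := T ! c @ [Suc m]]"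
      unfolding pm using False cA unfolding A_def P_def by (auto simp: Let_def)
    moreover have "T ! c @ [Suc m] = take (Suc r) (F ! c)"
      unfolding T_def Tc using v r by (simp add: take_Suc_conv_app_nth)
    ultimately show ?thesis using RS unfolding T_def by simp
  qed
qed

lemma sim:
  assumes st: "Star"
  shows "1 \<le> m \<Longrightarrow> m \<le> sum_list k + length k \<Longrightarrow> eta k (take m pF) = R m F"
proof (induction m)
  case 0 then show ?case by simp
next
  case (Suc m)
  show ?case
  proof (cases "m = 0")
    case True
    have "0 < length k" using Suc.prems by auto
    then show ?thesis using True R1 eta_take1 by simp
  next
    case False
    have m1: "1 \<le> m" "m < length pF" using False Suc.prems pF_len by auto
    have "eta k (take (Suc m) pF) = fill_step k (Suc m) (pF ! m) (eta k (take m pF))"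
      using eta_step[OF m1] .
    also have "\<dots> = fill_step k (Suc m) (pF ! m) (R m F)" using Suc.IH m1 Suc.prems by simp
    also have "\<dots> = R (Suc m) F" using sim_step[OF st] Suc.prems by simp
    finally show ?thesis .
  qed
qed

end


context tab begin

definition gt :: "nat \<Rightarrow> nat list \<Rightarrow> int" where
  "gt c v = (if v = [] then 0 else int (k ! c) + 1 - int (length v))"

definition G :: "nat list list \<Rightarrow> int" where
  "G T = (\<Sum>c<length k. gt c (T ! c))"

lemma G_upd:
  assumes "c < length k" "length T = length k"
  shows "G (T[c := v]) = G T - gt c (T ! c) + gt c v"
proof -
  have fin: "finite {..<length k}" by simp
  have cin: "c \<in> {..<length k}" using assms by simp
  have "G (T[c := v]) = gt c v + (\<Sum>c'\<in>{..<length k} - {c}. gt c' (T[c := v] ! c'))"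
    unfolding G_def using sum.remove[OF fin cin, of "\<lambda>c'. gt c' (T[c := v] ! c')"] assms by simp
  also have "(\<Sum>c'\<in>{..<length k} - {c}. gt c' (T[c := v] ! c')) = (\<Sum>c'\<in>{..<length k} - {c}. gt c' (T ! c'))"
    by (rule sum.cong) auto
  finally have 1: "G (T[c := v]) = gt c v + (\<Sum>c'\<in>{..<length k} - {c}. gt c' (T ! c'))" .
  have 2: "G T = gt c (T ! c) + (\<Sum>c'\<in>{..<length k} - {c}. gt c' (T ! c'))"
    unfolding G_def using sum.remove[OF fin cin, of "\<lambda>c'. gt c' (T ! c')"] by simp
  show ?thesis using 1 2 by simp
qed

lemma rank_G:
  "m \<le> sum_list k + length k \<Longrightarrow> sum_list (map (rank_step k) (take m pF)) = G (R m F)"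
proof (induction m)
  case 0
  have "G (R 0 F) = 0" unfolding G_def gt_def using R0 by simp
  then show ?case by simp
next
  case (Suc m)
  have mN: "m < sum_list k + length k" using Suc.prems by simp
  obtain c r where c: "c < length k" and r: "r < length (F ! c)" and v: "F ! c ! r = Suc m"
    and Tc: "R m F ! c = take r (F ! c)" and RS: "R (Suc m) F = (R m F)[c := take (Suc r) (F ! c)]"
    using R_step[OF mN] by blast
  have pm: "pF ! m = (if r = 0 then S c else W)" using pF_nth[OF mN] lt_val[OF c r] v by simp
  have tk: "take (Suc m) pF = take m pF @ [pF ! m]" using mN pF_len by (simp add: take_Suc_conv_app_nth)
  have "sum_list (map (rank_step k) (take (Suc m) pF)) = G (R m F) + rank_step k (pF ! m)"
    unfolding tk using Suc.IH mN by simp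
  moreover have "G (R (Suc m) F) = G (R m F) - gt c (take r (F ! c)) + gt c (take (Suc r) (F ! c))"
    unfolding RS using G_upd[OF c R_len] Tc by simp
  moreover have "gt c (take (Suc r) (F ! c)) - gt c (take r (F ! c)) = rank_step k (pF ! m)"
  proof (cases "r = 0")
    case True
    show ?thesis unfolding pm gt_def using True colne[OF c] by (cases "F ! c") auto
  next
    case False
    then show ?thesis unfolding pm gt_def using r colne[OF c] by simp
  qed
  ultimately show ?case by simp
qed

lemma G_nonneg: "0 \<le> G (R m F)"
  unfolding G_def
proof (rule sum_nonneg)
  fix c assume "c \<in> {..<length k}"
  then have c: "c < length k" by simp
  have "length (R m F ! c) \<le> length (F ! c)" using Rnth[OF c] by simp
  then show "0 \<le> gt c (R m F ! c)" unfolding gt_def using collen c by simp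
qed

lemma tops_filter: "filter istop [1..<sum_list k + length k + 1] = map (\<lambda>j. F ! j ! 0) [0..<length k]"
proof (rule sorted_distinct_set_unique)
  have s1: "sorted_wrt (<) (filter istop [1..<sum_list k + length k + 1])"
    by (rule sorted_wrt_filter) (rule sorted_wrt_upt)
  then show "sorted (filter istop [1..<sum_list k + length k + 1])"
    "distinct (filter istop [1..<sum_list k + length k + 1])" by (auto simp: strict_sorted_iff)
  have s2: "sorted_wrt (<) (map (\<lambda>j. F ! j ! 0) [0..<length k])"
    unfolding sorted_wrt_map sorted_wrt_iff_nth_less using row by simp
  then show "sorted (map (\<lambda>j. F ! j ! 0) [0..<length k])"
    "distinct (map (\<lambda>j. F ! j ! 0) [0..<length k])" by (auto simp: strict_sorted_iff)
  show "set (filter istop [1..<sum_list k + length k + 1]) = set (map (\<lambda>j. F ! j ! 0) [0..<length k])"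
  proof
    show "set (filter istop [1..<sum_list k + length k + 1]) \<subseteq> set (map (\<lambda>j. F ! j ! 0) [0..<length k])"
    proof
      fix x assume "x \<in> set (filter istop [1..<sum_list k + length k + 1])"
      then have "istop x" by simp
      then obtain j where "j < length k" "F ! j ! 0 = x" unfolding istop_def by blast
      then show "x \<in> set (map (\<lambda>j. F ! j ! 0) [0..<length k])" by auto
    qed
    show "set (map (\<lambda>j. F ! j ! 0) [0..<length k]) \<subseteq> set (filter istop [1..<sum_list k + length k + 1])"
    proof
      fix x assume "x \<in> set (map (\<lambda>j. F ! j ! 0) [0..<length k])"
      then obtain j where j: "j < length k" "x = F ! j ! 0" by auto
      have "x \<in> set (F ! j)" using j colne[OF j(1)] by simp
      then have "1 \<le> x \<and> x \<le> sum_list k + length k" using label_range[OF j(1)] by simp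
      moreover have "istop x" unfolding istop_def using j by auto
      ultimately show "x \<in> set (filter istop [1..<sum_list k + length k + 1])" by (simp del: upt_Suc)
    qed
  qed
qed

lemma pF_dyck: "pF \<in> dyck_paths k"
proof -
  have a: "filter (\<lambda>x. x \<noteq> W) pF = map S [0..<length k]"
  proof -
    have "filter (\<lambda>x. x \<noteq> W) pF = map lt (filter ((\<lambda>x. x \<noteq> W) \<circ> lt) [1..<sum_list k + length k + 1])"
      unfolding pF_def filter_map ..
    also have "filter ((\<lambda>x. x \<noteq> W) \<circ> lt) [1..<sum_list k + length k + 1] = filter istop [1..<sum_list k + length k + 1]"
      by (rule filter_cong) (auto simp: lt_def)
    also have "\<dots> = map (\<lambda>j. F ! j ! 0) [0..<length k]" by (rule tops_filter)
    also have "map lt (map (\<lambda>j. F ! j ! 0) [0..<length k]) = map S [0..<length k]"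
      unfolding map_map
    proof (rule map_cong)
      fix j assume "j \<in> set [0..<length k]"
      then have j: "j < length k" by simp
      then show "(lt \<circ> (\<lambda>j. F ! j ! 0)) j = S j" using lt_val[OF j, of 0] colne[OF j] by simp
    qed simp
    finally show ?thesis .
  qed
  have "length (filter (\<lambda>x. x \<noteq> W) pF) + length (filter (\<lambda>x. \<not> x \<noteq> W) pF) = length pF"
    by (rule sum_length_filter_compl)
  then have b: "length (filter (\<lambda>x. x = W) pF) = sum_list k" using a pF_len by simp
  have c: "\<forall>i < length pF. 0 \<le> sum_list (map (rank_step k) (take i pF))"
    using rank_G G_nonneg pF_len by simp
  show ?thesis unfolding dyck_paths_def using a b c by simp
qed

lemma bwd:
  assumes "Star"
  shows "\<exists>\<pi> \<in> dyck_paths k. eta k \<pi> = F"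
proof (cases "length k = 0")
  case True
  then have "k = []" "F = []" using len by auto
  moreover have "[] \<in> dyck_paths []" unfolding dyck_paths_def by simp
  moreover have "eta [] [] = []" unfolding eta_def by simp
  ultimately show ?thesis by auto
next
  case False
  have "eta k (take (sum_list k + length k) pF) = R (sum_list k + length k) F"
    using sim[OF assms _ le_refl] False by simp
  then have "eta k pF = F" using pF_len R_all by simp
  then show ?thesis using pF_dyck by auto
qed

end


theorem lemma3p10:
  fixes k :: "nat list" and F :: "nat list list"
  assumes kpos: "\<forall>x \<in> set k. 0 < x"
    and len: "length F = length k"
    and collen: "\<forall>i < length k. length (F ! i) = k ! i + 1"
    and bij: "distinct (concat F)" "set (concat F) = {1 .. sum_list k + length k}"
    and row: "\<forall>i j. i < j \<and> j < length k \<longrightarrow> F ! i ! 0 < F ! j ! 0"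
    and col: "\<forall>i < length k. sorted_wrt (<) (F ! i)"
  shows "(\<exists>\<pi> \<in> dyck_paths k. eta k \<pi> = F) \<longleftrightarrow>
         (\<forall>i < length k. \<forall>r. r + 1 < length (F ! i) \<longrightarrow>
            F ! i ! r < F ! i ! (r + 1) - 1 \<longrightarrow>
            (\<exists>C \<subseteq> {..<length k}.
               {F ! i ! r + 1 .. F ! i ! (r + 1) - 1} = (\<Union>c\<in>C. set (F ! c))))"
proof -
  interpret tab k F by (rule tab.intro) (fact assms)+
  have "(\<exists>\<pi> \<in> dyck_paths k. eta k \<pi> = F) \<longleftrightarrow> Star" using fwd bwd by blast
  also have "Star \<longleftrightarrow> RHS" using RHS_Star Star_RHS by blast
  finally show ?thesis unfolding RHS_def .
qed


end
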